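(* Let $Q\to\mathbb R$ be a smooth fibre bundle with bundle coordinates $(t,q^i)$ ($t$ the Cartesian coordinate on $\mathbb R$), and let $\xi=\partial_t+q^i_t\partial_i+\xi^i(t,q^j,q^j_t)\partial^t_i$ be a holonomic second order connection on $Q\to\mathbb R$ (i.e. a dynamic equation $q^i_{tt}=\xi^i$). Then the local expression $$\gamma_\xi=dt\otimes\Big[\partial_t+\big(\xi^i-\tfrac12 q^j_t\partial^t_j\xi^i\big)\partial^t_i\Big]+dq^j\otimes\Big[\partial_j+\tfrac12\partial^t_j\xi^i\,\partial^t_i\Big]$$ defines a (global) connection on the affine jet bundle $J^1Q\to Q$.
   Context: $J^1Q$ and $J^2Q$ carry adapted coordinates $(t,q^i,q^i_t)$ and $(t,q^i,q^i_t,q^i_{tt})$, and $\partial^t_i=\partial/\partial q^i_t$. A holonomic second order connection on $Q\to\mathbb R$ is a section of $J^2Q\to J^1Q$, identified with a vector field $\xi=\partial_t+q^i_t\partial_i+\xi^i\partial^t_i$ on $J^1Q$. A connection on the affine jet bundle $J^1Q\to Q$ (a dynamic connection) is a section of the first jet bundle $J^1_QJ^1Q\to J^1Q$ of $J^1Q\to Q$, written locally as $dq^\lambda\otimes(\partial_\lambda+\gamma^i_\lambda\partial^t_i)$ with $q^0=t$. *)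

theory Defs
  imports "HOL-Analysis.Analysis"
begin

fun Ck_on :: "nat \<Rightarrow> 'a::real_normed_vector set \<Rightarrow> ('a \<Rightarrow> 'b::real_normed_vector) \<Rightarrow> bool" where
  "Ck_on 0 U f = continuous_on U f"
| "Ck_on (Suc k) U f =
     (f differentiable_on U \<and> (\<forall>v. Ck_on k U (\<lambda>x. frechet_derivative f (at x) v)))"

definition smooth_on :: "'a::real_normed_vector set \<Rightarrow> ('a \<Rightarrow> 'b::real_normed_vector) \<Rightarrow> bool" where
  "smooth_on U f \<longleftrightarrow> (\<forall>k. Ck_on k U f)"

(* Points of Q in a bundle chart: (t, q); points of J^1Q: (t, q, q_t). *)

definition jet_dom :: "(real \<times> (real^'n)) set \<Rightarrow> (real \<times> (real^'n) \<times> (real^'n)) set" where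
  "jet_dom U = {(t, q, v). (t, q) \<in> U}"

definition pdqt :: "(real \<times> (real^'n) \<times> (real^'n) \<Rightarrow> (real^'n)) \<Rightarrow> 'n \<Rightarrow> real \<times> (real^'n) \<times> (real^'n) \<Rightarrow> (real^'n)" where
  "pdqt f j x = frechet_derivative f (at x) (0, 0, axis j 1)"

(* the coordinate change q' = Phi(t,q), t' = t, prolonged to J^1Q:
   q'_t = d_t Phi + q^j_t d_j Phi *)
definition jet_prolong :: "(real \<times> (real^'n) \<Rightarrow> (real^'n)) \<Rightarrow> real \<times> (real^'n) \<times> (real^'n) \<Rightarrow> real \<times> (real^'n) \<times> (real^'n)" where
  "jet_prolong \<Phi> x = (case x of (t, q, v) \<Rightarrow> (t, \<Phi> (t, q), frechet_derivative \<Phi> (at (t, q)) (1, v)))"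

(* the holonomic second order connection xi as vector field
   d_t + q^i_t d_i + xi^i d^t_i on J^1Q (local components) *)
definition so_vf :: "(real \<times> (real^'n) \<times> (real^'n) \<Rightarrow> (real^'n)) \<Rightarrow> real \<times> (real^'n) \<times> (real^'n) \<Rightarrow> real \<times> (real^'n) \<times> (real^'n)" where
  "so_vf \<xi> x = (1, snd (snd x), \<xi> x)"

definition dyn_conn_t :: "(real \<times> (real^'n) \<times> (real^'n) \<Rightarrow> (real^'n)) \<Rightarrow> real \<times> (real^'n) \<times> (real^'n) \<Rightarrow> (real^'n)" where
  "dyn_conn_t \<xi> x = \<xi> x - (1/2) *\<^sub>R (\<Sum>j\<in>UNIV. (snd (snd x)) $ j *\<^sub>R pdqt \<xi> j x)"

definition dyn_conn_q :: "(real \<times> (real^'n) \<times> (real^'n) \<Rightarrow> (real^'n)) \<Rightarrow> 'n \<Rightarrow> real \<times> (real^'n) \<times> (real^'n) \<Rightarrow> (real^'n)" where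
  "dyn_conn_q \<xi> j x = (1/2) *\<^sub>R pdqt \<xi> j x"

(* horizontal lift of a tangent vector u = (u^0, u^j) of Q by the connection
   dq^lambda (x) (d_lambda + g^i_lambda d^t_i) at the point x of J^1Q *)
definition hlift :: "(real \<times> (real^'n) \<times> (real^'n) \<Rightarrow> (real^'n)) \<Rightarrow> ('n \<Rightarrow> real \<times> (real^'n) \<times> (real^'n) \<Rightarrow> (real^'n))
                     \<Rightarrow> real \<times> (real^'n) \<times> (real^'n) \<Rightarrow> real \<times> (real^'n) \<Rightarrow> real \<times> (real^'n) \<times> (real^'n)" where
  "hlift g0 gq x u = (fst u, snd u, fst u *\<^sub>R g0 x + (\<Sum>j\<in>UNIV. (snd u) $ j *\<^sub>R gq j x))"

end

theory Submission
  imports Defs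
begin


lemma Ck_mono: "Ck_on (Suc k) U f \<Longrightarrow> Ck_on k U f"
proof (induction k arbitrary: f)
  case 0 then show ?case by (simp add: differentiable_imp_continuous_on)
next
  case (Suc k) then show ?case by simp
qed

lemma Ck_cong:
  assumes "open U" "\<And>x. x\<in>U \<Longrightarrow> f x = g x" "Ck_on k U f"
  shows "Ck_on k U g"
  using assms(2,3)
proof (induction k arbitrary: f g)
  case 0 then show ?case using continuous_on_cong by (metis Ck_on.simps(1))
next
  case (Suc k)
  have df: "f differentiable_on U" using Suc.prems by simp
  have dg: "g differentiable_on U"
    unfolding differentiable_on_eq_differentiable_at[OF assms(1)]
  proof
    fix x assume x: "x \<in> U"
    have "f differentiable at x" using df x assms(1) by (simp add: differentiable_on_eq_differentiable_at)
    then show "g differentiable at x"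
      by (meson Suc.prems(1) assms(1) differentiable_def has_derivative_transform_within_open x)
  qed
  have "Ck_on k U (\<lambda>x. frechet_derivative g (at x) v)" for v
  proof (rule Suc.IH[of "\<lambda>x. frechet_derivative f (at x) v"])
    fix x assume x: "x \<in> U"
    have "f differentiable at x" using df x assms(1) by (simp add: differentiable_on_eq_differentiable_at)
    then show "frechet_derivative f (at x) v = frechet_derivative g (at x) v"
      using frechet_derivative_transform_within_open[OF _ assms(1) x] Suc.prems(1) by metis
  next
    show "Ck_on k U (\<lambda>x. frechet_derivative f (at x) v)" using Suc.prems by simp
  qed
  then show ?case using dg by simp
qed

lemma Ck_add:
  assumes "open U" shows "Ck_on k U f \<Longrightarrow> Ck_on k U g \<Longrightarrow> Ck_on k U (\<lambda>x. f x + g x)"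
proof (induction k arbitrary: f g)
  case 0 then show ?case by (simp add: continuous_on_add)
next
  case (Suc k)
  have df: "f differentiable_on U" and dg: "g differentiable_on U" using Suc.prems by auto
  have "Ck_on k U (\<lambda>x. frechet_derivative (\<lambda>x. f x + g x) (at x) v)" for v
  proof (rule Ck_cong[OF assms, of "\<lambda>x. frechet_derivative f (at x) v + frechet_derivative g (at x) v"])
    fix x assume x: "x \<in> U"
    have "f differentiable at x" "g differentiable at x" using df dg x assms by (auto simp add: differentiable_on_eq_differentiable_at)
    then have "((\<lambda>x. f x + g x) has_derivative (\<lambda>v. frechet_derivative f (at x) v + frechet_derivative g (at x) v)) (at x)"
      by (intro has_derivative_add) (auto simp: frechet_derivative_works)
    then show "frechet_derivative f (at x) v + frechet_derivative g (at x) v = frechet_derivative (\<lambda>x. f x + g x) (at x) v"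
      using frechet_derivative_at by metis
  next
    show "Ck_on k U (\<lambda>x. frechet_derivative f (at x) v + frechet_derivative g (at x) v)"
      using Suc by simp
  qed
  moreover have "(\<lambda>x. f x + g x) differentiable_on U" using df dg by (simp add: differentiable_on_add)
  ultimately show ?case by simp
qed

lemma Ck_scaleR:
  fixes a :: "'a::real_normed_vector \<Rightarrow> real"
  assumes "open U" shows "Ck_on k U a \<Longrightarrow> Ck_on k U g \<Longrightarrow> Ck_on k U (\<lambda>x. a x *\<^sub>R g x)"
proof (induction k arbitrary: a g)
  case 0 then show ?case by (simp add: continuous_on_scaleR)
next
  case (Suc k)
  have df: "a differentiable_on U" and dg: "g differentiable_on U" using Suc.prems by auto
  have "Ck_on k U (\<lambda>x. frechet_derivative (\<lambda>x. a x *\<^sub>R g x) (at x) v)" for v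
  proof (rule Ck_cong[OF assms, of "\<lambda>x. a x *\<^sub>R frechet_derivative g (at x) v + frechet_derivative a (at x) v *\<^sub>R g x"])
    fix x assume x: "x \<in> U"
    have "a differentiable at x" "g differentiable at x" using df dg x assms by (auto simp add: differentiable_on_eq_differentiable_at)
    then have "((\<lambda>x. a x *\<^sub>R g x) has_derivative (\<lambda>v. a x *\<^sub>R frechet_derivative g (at x) v + frechet_derivative a (at x) v *\<^sub>R g x)) (at x)"
      by (intro has_derivative_scaleR) (auto simp: frechet_derivative_works)
    then show "a x *\<^sub>R frechet_derivative g (at x) v + frechet_derivative a (at x) v *\<^sub>R g x = frechet_derivative (\<lambda>x. a x *\<^sub>R g x) (at x) v"
      using frechet_derivative_at by metis
  next
    show "Ck_on k U (\<lambda>x. a x *\<^sub>R frechet_derivative g (at x) v + frechet_derivative a (at x) v *\<^sub>R g x)"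
    proof (rule Ck_add[OF assms])
      have a0: "Ck_on k U a" using Suc.prems(1) by (rule Ck_mono)
      have g0: "Ck_on k U g" using Suc.prems(2) by (rule Ck_mono)
      show "Ck_on k U (\<lambda>x. a x *\<^sub>R frechet_derivative g (at x) v)"
        using Suc.IH[OF a0] Suc.prems(2) by simp
      show "Ck_on k U (\<lambda>x. frechet_derivative a (at x) v *\<^sub>R g x)"
        using Suc.IH[OF _ g0] Suc.prems(1) by simp
    qed
  qed
  moreover have "(\<lambda>x. a x *\<^sub>R g x) differentiable_on U" using df dg by (simp add: differentiable_on_scaleR)
  ultimately show ?case by simp
qed

lemma Ck_const: "Ck_on k U (\<lambda>x. c)"
proof (induction k arbitrary: c)
  case 0 then show ?case by simp
next
  case (Suc k) then show ?case by simp
qed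

lemma Ck_linear:
  assumes "bounded_linear L" shows "Ck_on k U L"
  using assms
proof (induction k arbitrary: L)
  case 0 then show ?case by (simp add: linear_continuous_on)
next
  case (Suc k)
  have fd: "frechet_derivative L (at x) = L" for x
    using frechet_derivative_at[OF bounded_linear.has_derivative[OF Suc.prems has_derivative_ident]] by simp
  have "Ck_on k U (\<lambda>x. L v)" for v by (rule Ck_const)
  then show ?case using fd Suc.prems by (simp add: bounded_linear_imp_differentiable_on)
qed



lemma Ck_sum:
  assumes "open U" "finite S" shows "(\<And>i. i\<in>S \<Longrightarrow> Ck_on k U (f i)) \<Longrightarrow> Ck_on k U (\<lambda>x. \<Sum>i\<in>S. f i x)"
  using assms(2)
proof (induction S rule: finite_induct)
  case empty then show ?case by (simp add: Ck_const)
next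
  case (insert i S) then show ?case by (simp add: Ck_add[OF assms(1)])
qed

lemma part1:
  fixes \<xi> :: "real \<times> (real^'n) \<times> (real^'n) \<Rightarrow> (real^'n)"
  assumes V: "open V" and sm: "smooth_on V \<xi>"
  shows "smooth_on V (dyn_conn_t \<xi>) \<and> (\<forall>j. smooth_on V (dyn_conn_q \<xi> j))"
proof -
  have pd: "Ck_on k V (pdqt \<xi> j)" for k j
  proof -
    have "Ck_on (Suc k) V \<xi>" using sm by (simp add: smooth_on_def)
    then show ?thesis unfolding pdqt_def[abs_def] by simp
  qed
  have q: "dyn_conn_q \<xi> j = (\<lambda>x. (\<lambda>x. 1/2) x *\<^sub>R pdqt \<xi> j x)" for j
    by (rule ext) (simp add: dyn_conn_q_def)
  have bl: "bounded_linear (\<lambda>x::real \<times> (real^'n) \<times> (real^'n). (snd (snd x)) $ j)" for j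
    by (intro bounded_linear_compose[OF bounded_linear_vec_nth] bounded_linear_compose[OF bounded_linear_snd] bounded_linear_snd)
  have t: "dyn_conn_t \<xi> = (\<lambda>x. \<xi> x + (\<lambda>x. -1/2) x *\<^sub>R (\<Sum>j\<in>UNIV. (\<lambda>x. (snd (snd x)) $ j) x *\<^sub>R pdqt \<xi> j x))"
    by (rule ext) (simp add: dyn_conn_t_def)
  have "Ck_on k V (dyn_conn_t \<xi>)" for k
    unfolding t
    apply (rule Ck_add[OF V])
    using sm apply (simp add: smooth_on_def)
    apply (rule Ck_scaleR[OF V])
     apply (rule Ck_const)
    apply (rule Ck_sum[OF V], simp)
    apply (rule Ck_scaleR[OF V])
     apply (rule Ck_linear[OF bl])
    by (rule pd)
  moreover have "Ck_on k V (dyn_conn_q \<xi> j)" for k j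
    unfolding q
    apply (rule Ck_scaleR[OF V])
     apply (rule Ck_const)
    by (rule pd)
  ultimately show ?thesis by (simp add: smooth_on_def)
qed



lemma mvt2x:
  fixes f :: "'a::real_normed_vector \<Rightarrow> 'b::real_inner"
  assumes df: "\<And>y. y\<in>U \<Longrightarrow> (f has_derivative Df y) (at y)"
   and d2: "\<And>y. y\<in>U \<Longrightarrow> ((\<lambda>y. Df y h) has_derivative D2 y) (at y)"
   and s: "s>0" and box: "\<And>a b. a\<in>{0..s} \<Longrightarrow> b\<in>{0..s} \<Longrightarrow> p + a*\<^sub>R h + b*\<^sub>R k \<in> U"
  shows "\<exists>a\<in>{0..s}. \<exists>b\<in>{0..s}. (f (p + s*\<^sub>R h + s*\<^sub>R k) - f (p + s*\<^sub>R h) - f (p + s*\<^sub>R k) + f p) \<bullet> e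
            = s * s * (D2 (p + a*\<^sub>R h + b*\<^sub>R k) k \<bullet> e)"
proof -
  define g where "g a = (f (p + a*\<^sub>R h + s*\<^sub>R k) - f (p + a*\<^sub>R h)) \<bullet> e" for a
  have gd: "(g has_derivative (\<lambda>d. (Df (p + a*\<^sub>R h + s*\<^sub>R k) (d*\<^sub>R h) - Df (p + a*\<^sub>R h) (d*\<^sub>R h)) \<bullet> e)) (at a within {0..s})"
    if a: "a \<in> {0..s}" for a
  proof -
    have u1: "p + a*\<^sub>R h + s*\<^sub>R k \<in> U" using box[OF a] s by auto
    have u0: "p + a*\<^sub>R h \<in> U" using box[OF a, of 0] s by simp
    have 1: "((\<lambda>a. p + a*\<^sub>R h + s*\<^sub>R k) has_derivative (\<lambda>d. d*\<^sub>R h)) (at a)"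
      by (auto intro!: derivative_eq_intros)
    have 0: "((\<lambda>a. p + a*\<^sub>R h) has_derivative (\<lambda>d. d*\<^sub>R h)) (at a)"
      by (auto intro!: derivative_eq_intros)
    have "((\<lambda>a. f (p + a*\<^sub>R h + s*\<^sub>R k)) has_derivative (\<lambda>d. Df (p + a*\<^sub>R h + s*\<^sub>R k) (d*\<^sub>R h))) (at a)"
      using diff_chain_at[OF 1 df[OF u1]] by (simp add: o_def)
    moreover have "((\<lambda>a. f (p + a*\<^sub>R h)) has_derivative (\<lambda>d. Df (p + a*\<^sub>R h) (d*\<^sub>R h))) (at a)"
      using diff_chain_at[OF 0 df[OF u0]] by (simp add: o_def)
    ultimately have "(g has_derivative (\<lambda>d. (Df (p + a*\<^sub>R h + s*\<^sub>R k) (d*\<^sub>R h) - Df (p + a*\<^sub>R h) (d*\<^sub>R h)) \<bullet> e)) (at a)"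
      unfolding g_def[abs_def] by (intro has_derivative_inner_left has_derivative_diff)
    then show ?thesis by (rule has_derivative_at_withinI)
  qed
  obtain a1 where a1: "a1 \<in> {0<..<s}"
    and eq1: "g s - g 0 = (Df (p + a1*\<^sub>R h + s*\<^sub>R k) ((s - 0)*\<^sub>R h) - Df (p + a1*\<^sub>R h) ((s - 0)*\<^sub>R h)) \<bullet> e"
    using mvt_simple[OF s gd] by auto
  have a1': "a1 \<in> {0..s}" using a1 by auto
  have "p + a1*\<^sub>R h + s*\<^sub>R k \<in> U" using box[OF a1', of s] s by simp
  then have lin1: "linear (Df (p + a1*\<^sub>R h + s*\<^sub>R k))" by (rule has_derivative_linear[OF df])
  have "p + a1*\<^sub>R h \<in> U" using box[OF a1', of 0] s by simp
  then have lin0: "linear (Df (p + a1*\<^sub>R h))" by (rule has_derivative_linear[OF df])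
  have eq1': "g s - g 0 = s * ((Df (p + a1*\<^sub>R h + s*\<^sub>R k) h - Df (p + a1*\<^sub>R h) h) \<bullet> e)"
    using eq1 linear_scale[OF lin1] linear_scale[OF lin0] by (simp add: inner_diff_left right_diff_distrib)
  define m where "m b = Df (p + a1*\<^sub>R h + b*\<^sub>R k) h \<bullet> e" for b
  have md: "(m has_derivative (\<lambda>d. D2 (p + a1*\<^sub>R h + b*\<^sub>R k) (d*\<^sub>R k) \<bullet> e)) (at b within {0..s})"
    if b: "b \<in> {0..s}" for b
  proof -
    have u: "p + a1*\<^sub>R h + b*\<^sub>R k \<in> U" using box[OF a1' b] .
    have 1: "((\<lambda>b. p + a1*\<^sub>R h + b*\<^sub>R k) has_derivative (\<lambda>d. d*\<^sub>R k)) (at b)"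
      by (auto intro!: derivative_eq_intros)
    have "((\<lambda>b. Df (p + a1*\<^sub>R h + b*\<^sub>R k) h) has_derivative (\<lambda>d. D2 (p + a1*\<^sub>R h + b*\<^sub>R k) (d*\<^sub>R k))) (at b)"
      using diff_chain_at[OF 1 d2[OF u]] by (simp add: o_def)
    then have "(m has_derivative (\<lambda>d. D2 (p + a1*\<^sub>R h + b*\<^sub>R k) (d*\<^sub>R k) \<bullet> e)) (at b)"
      unfolding m_def[abs_def] by (intro has_derivative_inner_left)
    then show ?thesis by (rule has_derivative_at_withinI)
  qed
  obtain b1 where b1: "b1 \<in> {0<..<s}"
    and eq2: "m s - m 0 = D2 (p + a1*\<^sub>R h + b1*\<^sub>R k) ((s - 0)*\<^sub>R k) \<bullet> e"
    using mvt_simple[OF s md] by auto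
  have b1': "b1 \<in> {0..s}" using b1 by auto
  have lin2: "linear (D2 (p + a1*\<^sub>R h + b1*\<^sub>R k))" by (rule has_derivative_linear[OF d2[OF box[OF a1' b1']]])
  have eq2': "m s - m 0 = s * (D2 (p + a1*\<^sub>R h + b1*\<^sub>R k) k \<bullet> e)"
    using eq2 linear_scale[OF lin2] by simp
  have "m s - m 0 = (Df (p + a1*\<^sub>R h + s*\<^sub>R k) h - Df (p + a1*\<^sub>R h) h) \<bullet> e"
    unfolding m_def by (simp add: inner_diff_left)
  then have "g s - g 0 = s * s * (D2 (p + a1*\<^sub>R h + b1*\<^sub>R k) k \<bullet> e)"
    using eq1' eq2' by simp
  moreover have "g s - g 0 = (f (p + s*\<^sub>R h + s*\<^sub>R k) - f (p + s*\<^sub>R h) - f (p + s*\<^sub>R k) + f p) \<bullet> e"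
    unfolding g_def by (simp add: inner_diff_left inner_add_left)
  ultimately show ?thesis using a1' b1' by metis
qed

lemma schwarz:
  fixes f :: "'a::real_normed_vector \<Rightarrow> 'b::real_inner"
  assumes U: "open U" and c2: "Ck_on (Suc (Suc 0)) U f" and p: "p \<in> U"
  shows "frechet_derivative (\<lambda>y. frechet_derivative f (at y) k) (at p) h
       = frechet_derivative (\<lambda>y. frechet_derivative f (at y) h) (at p) k"
proof (rule ccontr)
  define Df where "Df y = frechet_derivative f (at y)" for y
  define DD where "DD w y = frechet_derivative (\<lambda>y. Df y w) (at y)" for w y
  have fd: "f differentiable_on U" and dd: "\<And>w. (\<lambda>y. Df y w) differentiable_on U"
    and cc: "\<And>w z. continuous_on U (\<lambda>y. DD w y z)"
    using c2 by (simp_all add: Df_def DD_def)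
  have df: "(f has_derivative Df y) (at y)" if "y \<in> U" for y
    using fd that U unfolding Df_def
    by (simp add: differentiable_on_eq_differentiable_at frechet_derivative_works)
  have d2: "((\<lambda>y. Df y w) has_derivative DD w y) (at y)" if "y \<in> U" for y w
    using dd[of w] that U unfolding DD_def
    by (simp add: differentiable_on_eq_differentiable_at frechet_derivative_works)
  assume ne: "frechet_derivative (\<lambda>y. frechet_derivative f (at y) k) (at p) h
       \<noteq> frechet_derivative (\<lambda>y. frechet_derivative f (at y) h) (at p) k"
  define c1 where "c1 = DD k p h"
  define c2 where "c2 = DD h p k"
  have "c1 \<noteq> c2" using ne unfolding c1_def c2_def DD_def Df_def by simp
  define e where "e = c1 - c2"
  define E where "E = e \<bullet> e"
  have E: "E > 0" unfolding E_def e_def using \<open>c1 \<noteq> c2\<close> by simp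
  have cont1: "continuous_on U (\<lambda>y. DD k y h \<bullet> e)"
    by (intro continuous_on_inner cc continuous_on_const)
  have cont2: "continuous_on U (\<lambda>y. DD h y k \<bullet> e)"
    by (intro continuous_on_inner cc continuous_on_const)
  obtain d1 where d1: "d1 > 0" "\<And>y. y \<in> U \<Longrightarrow> dist y p < d1 \<Longrightarrow> dist (DD k y h \<bullet> e) (DD k p h \<bullet> e) < E/2"
    using cont1 p E unfolding continuous_on_iff by (metis half_gt_zero)
  obtain d2' where d2': "d2' > 0" "\<And>y. y \<in> U \<Longrightarrow> dist y p < d2' \<Longrightarrow> dist (DD h y k \<bullet> e) (DD h p k \<bullet> e) < E/2"
    using cont2 p E unfolding continuous_on_iff by (metis half_gt_zero)
  obtain r where r: "r > 0" "ball p r \<subseteq> U" using U p open_contains_ball by blast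
  define d where "d = min (min d1 d2') r"
  have d: "d > 0" using d1 d2' r by (simp add: d_def)
  define s where "s = d / (2 * (norm h + norm k + 1))"
  have s: "s > 0" unfolding s_def using d by (intro divide_pos_pos) (auto intro: add_nonneg_pos)
  have close: "dist (p + a*\<^sub>R h + b*\<^sub>R k) p < d" if "a \<in> {0..s}" "b \<in> {0..s}" for a b
  proof -
    have "dist (p + a*\<^sub>R h + b*\<^sub>R k) p = norm (a*\<^sub>R h + b*\<^sub>R k)" by (simp add: dist_norm)
    also have "\<dots> \<le> a * norm h + b * norm k"
      using that by (metis atLeastAtMost_iff norm_scaleR abs_of_nonneg norm_triangle_ineq)
    also have "\<dots> \<le> s * norm h + s * norm k"
      using that by (intro add_mono mult_right_mono) auto
    also have "\<dots> < s * (2 * (norm h + norm k + 1))"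
    proof -
      have "0 \<le> s * norm h" "0 \<le> s * norm k" using s by auto
      then show ?thesis using s by (simp add: algebra_simps) (smt (verit) mult_nonneg_nonneg norm_ge_zero)
    qed
    also have "\<dots> = d" unfolding s_def
      by (smt (verit, best) nonzero_eq_divide_eq norm_ge_zero)
    finally show ?thesis .
  qed
  have inU: "p + a*\<^sub>R h + b*\<^sub>R k \<in> U" if "a \<in> {0..s}" "b \<in> {0..s}" for a b
    using close[OF that] r by (auto simp: d_def dist_commute)
  have inU': "p + a*\<^sub>R k + b*\<^sub>R h \<in> U" if "a \<in> {0..s}" "b \<in> {0..s}" for a b
    using inU[OF that(2,1)] by (simp add: add_ac)
  obtain a1 b1 where ab1: "a1 \<in> {0..s}" "b1 \<in> {0..s}"
    and eq1: "(f (p + s*\<^sub>R h + s*\<^sub>R k) - f (p + s*\<^sub>R h) - f (p + s*\<^sub>R k) + f p) \<bullet> e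
            = s * s * (DD h (p + a1*\<^sub>R h + b1*\<^sub>R k) k \<bullet> e)"
    using mvt2x[of U f Df h "DD h" s p k e, OF df d2 s inU] by blast
  obtain a2 b2 where ab2: "a2 \<in> {0..s}" "b2 \<in> {0..s}"
    and eq2: "(f (p + s*\<^sub>R k + s*\<^sub>R h) - f (p + s*\<^sub>R k) - f (p + s*\<^sub>R h) + f p) \<bullet> e
            = s * s * (DD k (p + a2*\<^sub>R k + b2*\<^sub>R h) h \<bullet> e)"
    using mvt2x[of U f Df k "DD k" s p h e, OF df d2 s inU'] by blast
  have "s * s * (DD h (p + a1*\<^sub>R h + b1*\<^sub>R k) k \<bullet> e) = s * s * (DD k (p + a2*\<^sub>R k + b2*\<^sub>R h) h \<bullet> e)"
    using eq1 eq2 by (simp add: add_ac algebra_simps)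
  then have eq: "DD h (p + a1*\<^sub>R h + b1*\<^sub>R k) k \<bullet> e = DD k (p + a2*\<^sub>R k + b2*\<^sub>R h) h \<bullet> e"
    using s by simp
  have y2: "p + a2*\<^sub>R k + b2*\<^sub>R h = p + b2*\<^sub>R h + a2*\<^sub>R k" by (simp add: add_ac)
  have A1: "\<bar>DD h (p + a1*\<^sub>R h + b1*\<^sub>R k) k \<bullet> e - c2 \<bullet> e\<bar> < E/2"
    using d2'(2)[OF inU[OF ab1] ] close[OF ab1] unfolding c2_def d_def dist_real_def by auto
  have A2: "\<bar>DD k (p + a2*\<^sub>R k + b2*\<^sub>R h) h \<bullet> e - c1 \<bullet> e\<bar> < E/2"
    using d1(2)[OF inU[OF ab2(2,1)] ] close[OF ab2(2,1)] unfolding c1_def d_def dist_real_def y2 by auto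
  have "c1 \<bullet> e - c2 \<bullet> e = E" unfolding E_def e_def by (simp add: inner_diff_left inner_diff_right inner_commute)
  then show False using A1 A2 eq by linarith
qed



lemma vec_exp: "(w::real^'n) = (\<Sum>j\<in>UNIV. w$j *\<^sub>R axis j (1::real))"
  using basis_expansion[of w] by (simp add: scalar_mult_eq_scaleR)

lemma pair0_exp: "(0::real, w::real^'n) = (\<Sum>j\<in>UNIV. w$j *\<^sub>R (0::real, axis j (1::real)))"
  by (rule prod_eqI) (simp_all add: fst_sum snd_sum vec_exp[symmetric])

lemma trip0_exp: "(0::real, 0::real^'n, w::real^'n) = (\<Sum>j\<in>UNIV. w$j *\<^sub>R (0::real, 0::real^'n, axis j (1::real)))"
  by (rule prod_eqI; simp add: fst_sum snd_sum; rule prod_eqI; simp add: fst_sum snd_sum vec_exp[symmetric])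

lemma lin_pair0:
  fixes L :: "real \<times> (real^'n) \<Rightarrow> 'b::real_vector"
  assumes "linear L" shows "(\<Sum>j\<in>UNIV. w$j *\<^sub>R L (0, axis j 1)) = L (0, w)"
  by (subst pair0_exp[of w]) (simp only: linear_sum[OF assms] linear_scale[OF assms] comp_def)

lemma lin_trip0:
  fixes L :: "real \<times> (real^'n) \<times> (real^'n) \<Rightarrow> 'b::real_vector"
  assumes "linear L" shows "(\<Sum>j\<in>UNIV. w$j *\<^sub>R L (0, 0, axis j 1)) = L (0, 0, w)"
  by (subst trip0_exp[of w]) (simp only: linear_sum[OF assms] linear_scale[OF assms] comp_def)

lemma open_jet_dom:
  fixes U :: "(real \<times> (real^'n)) set"
  assumes U: "open U" shows "open (jet_dom U)"
proof -
  have "jet_dom U = (\<lambda>x::real \<times> (real^'n) \<times> (real^'n). (fst x, fst (snd x))) -` U"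
    by (auto simp: jet_dom_def)
  moreover have "continuous_on UNIV (\<lambda>x::real \<times> (real^'n) \<times> (real^'n). (fst x, fst (snd x)))"
    by (intro continuous_intros)
  ultimately show ?thesis using U by (simp add: open_vimage)
qed



definition AA :: "(real \<times> (real^'n) \<Rightarrow> (real^'n)) \<Rightarrow> real \<times> (real^'n) \<Rightarrow> real \<times> (real^'n) \<Rightarrow> real^'n"
  where "AA \<Phi> p = frechet_derivative \<Phi> (at p)"
definition BB :: "(real \<times> (real^'n) \<Rightarrow> (real^'n)) \<Rightarrow> real \<times> (real^'n) \<Rightarrow> real \<times> (real^'n) \<Rightarrow> real \<times> (real^'n) \<Rightarrow> real^'n"
  where "BB \<Phi> p k = frechet_derivative (\<lambda>p. frechet_derivative \<Phi> (at p) k) (at p)"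

definition PP :: "real \<times> (real^'n) \<times> (real^'n) \<Rightarrow> real \<times> (real^'n)"
  where "PP x = (fst x, fst (snd x))"

lemma bl_PP: "bounded_linear PP"
  unfolding PP_def[abs_def]
  by (intro bounded_linear_Pair bounded_linear_fst bounded_linear_compose[OF bounded_linear_fst bounded_linear_snd])

lemma hlift_eq:
  fixes \<zeta> :: "real \<times> (real^'n) \<times> (real^'n) \<Rightarrow> (real^'n)"
  assumes lin: "linear (frechet_derivative \<zeta> (at y))"
  shows "hlift (dyn_conn_t \<zeta>) (dyn_conn_q \<zeta>) y (u0, w)
       = (u0, w, u0 *\<^sub>R \<zeta> y + (1/2) *\<^sub>R frechet_derivative \<zeta> (at y) (0, 0, w - u0 *\<^sub>R snd (snd y)))"
proof -
  define D where "D = frechet_derivative \<zeta> (at y)"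
  have lD: "linear D" using lin D_def by simp
  have s1: "(\<Sum>j\<in>UNIV. c $ j *\<^sub>R pdqt \<zeta> j y) = D (0, 0, c)" for c
    unfolding pdqt_def D_def[symmetric] by (rule lin_trip0[OF lD])
  have s2: "(\<Sum>j\<in>UNIV. w $ j *\<^sub>R dyn_conn_q \<zeta> j y) = (1/2) *\<^sub>R D (0, 0, w)"
  proof -
    have "(\<Sum>j\<in>UNIV. w $ j *\<^sub>R dyn_conn_q \<zeta> j y) = (\<Sum>j\<in>UNIV. (1/2) *\<^sub>R (w $ j *\<^sub>R pdqt \<zeta> j y))"
      unfolding dyn_conn_q_def by (simp add: scaleR_scaleR mult.commute)
    also have "\<dots> = (1/2) *\<^sub>R (\<Sum>j\<in>UNIV. w $ j *\<^sub>R pdqt \<zeta> j y)" by (rule scaleR_sum_right[symmetric])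
    finally show ?thesis using s1 by simp
  qed
  have s3: "dyn_conn_t \<zeta> y = \<zeta> y - (1/2) *\<^sub>R D (0, 0, snd (snd y))"
    unfolding dyn_conn_t_def s1 ..
  have s4: "D (0, 0, w - u0 *\<^sub>R snd (snd y)) = D (0, 0, w) - u0 *\<^sub>R D (0, 0, snd (snd y))"
  proof -
    have "(0::real, 0::real^'n, w - u0 *\<^sub>R snd (snd y)) = (0, 0, w) - u0 *\<^sub>R (0, 0, snd (snd y))" by simp
    then show ?thesis by (simp only: linear_diff[OF lD] linear_scale[OF lD])
  qed
  show ?thesis unfolding hlift_def fst_conv snd_conv s2 s3 D_def[symmetric] s4
    by (simp add: algebra_simps)
qed

context
  fixes \<Phi> :: "real \<times> (real^'n) \<Rightarrow> (real^'n)" and U :: "(real \<times> (real^'n)) set"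
  assumes U: "open U" and sm: "smooth_on U \<Phi>"
begin

lemma c2: "Ck_on (Suc (Suc 0)) U \<Phi>" using sm by (simp add: smooth_on_def)

lemma L1: "p \<in> U \<Longrightarrow> (\<Phi> has_derivative AA \<Phi> p) (at p)"
  using c2 U by (simp add: AA_def differentiable_on_eq_differentiable_at frechet_derivative_works)

lemma L1lin: "p \<in> U \<Longrightarrow> linear (AA \<Phi> p)"
  using L1 has_derivative_linear by blast

lemma L2: assumes p: "p \<in> U" shows "((\<lambda>p. AA \<Phi> p k) has_derivative BB \<Phi> p k) (at p)"
proof -
  have "(\<lambda>x. frechet_derivative \<Phi> (at x) k) differentiable_on U"
    using c2 unfolding Ck_on.simps by blast
  then show ?thesis using U p
    by (simp add: AA_def BB_def differentiable_on_eq_differentiable_at frechet_derivative_works)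
qed

lemma L2lin: "p \<in> U \<Longrightarrow> linear (BB \<Phi> p k)"
  using L2 has_derivative_linear by blast

lemma L3: assumes p: "p \<in> U" shows "linear (\<lambda>k. BB \<Phi> p k h)"
proof (rule linearI)
  fix k1 k2
  have "((\<lambda>p. AA \<Phi> p k1 + AA \<Phi> p k2) has_derivative (\<lambda>h. BB \<Phi> p k1 h + BB \<Phi> p k2 h)) (at p)"
    by (intro has_derivative_add L2 p)
  then have "((\<lambda>p. AA \<Phi> p (k1 + k2)) has_derivative (\<lambda>h. BB \<Phi> p k1 h + BB \<Phi> p k2 h)) (at p)"
    by (rule has_derivative_transform_within_open[OF _ U p]) (simp add: linear_add[OF L1lin])
  from has_derivative_unique[OF L2[OF p] this]
  show "BB \<Phi> p (k1 + k2) h = BB \<Phi> p k1 h + BB \<Phi> p k2 h" by metis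
next
  fix c :: real and k
  have "((\<lambda>p. c *\<^sub>R AA \<Phi> p k) has_derivative (\<lambda>h. c *\<^sub>R BB \<Phi> p k h)) (at p)"
    by (intro has_derivative_scaleR_right L2 p)
  then have "((\<lambda>p. AA \<Phi> p (c *\<^sub>R k)) has_derivative (\<lambda>h. c *\<^sub>R BB \<Phi> p k h)) (at p)"
    by (rule has_derivative_transform_within_open[OF _ U p]) (simp add: linear_scale[OF L1lin])
  from has_derivative_unique[OF L2[OF p] this]
  show "BB \<Phi> p (c *\<^sub>R k) h = c *\<^sub>R BB \<Phi> p k h" by metis
qed

lemma L4: "p \<in> U \<Longrightarrow> BB \<Phi> p k h = BB \<Phi> p h k"
  using schwarz[OF U c2] by (simp add: BB_def)

lemma jp_eq: "jet_prolong \<Phi> = (\<lambda>y. (fst y, \<Phi> (PP y), AA \<Phi> (PP y) (1, snd (snd y))))"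
  by (rule ext) (auto simp: jet_prolong_def PP_def AA_def split: prod.split)

lemma L5: assumes x: "x \<in> jet_dom U"
  shows "(jet_prolong \<Phi> has_derivative (\<lambda>d. (fst d, AA \<Phi> (PP x) (PP d),
            BB \<Phi> (PP x) (1, snd (snd x)) (PP d) + AA \<Phi> (PP x) (0, snd (snd d))))) (at x)"
proof -
  have px: "PP x \<in> U" using x by (cases x) (auto simp: jet_dom_def PP_def)
  have dP: "(PP has_derivative PP) (at x)" by (rule bounded_linear_imp_has_derivative[OF bl_PP])
  have dA: "((\<lambda>y. AA \<Phi> (PP y) k) has_derivative (\<lambda>d. BB \<Phi> (PP x) k (PP d))) (at x)" for k
    using diff_chain_at[OF dP L2[OF px]] by (simp add: o_def)
  have dPhi: "((\<lambda>y. \<Phi> (PP y)) has_derivative (\<lambda>d. AA \<Phi> (PP x) (PP d))) (at x)"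
    using diff_chain_at[OF dP L1[OF px]] by (simp add: o_def)
  have blv: "bounded_linear (\<lambda>y::real \<times> (real^'n) \<times> (real^'n). (snd (snd y)) $ j)" for j
    by (intro bounded_linear_compose[OF bounded_linear_vec_nth] bounded_linear_compose[OF bounded_linear_snd] bounded_linear_snd)
  have dv: "((\<lambda>y. (snd (snd y)) $ j) has_derivative (\<lambda>d. (snd (snd d)) $ j)) (at x)" for j
    by (rule bounded_linear_imp_has_derivative[OF blv])
  define G where "G y = AA \<Phi> (PP y) (1,0) + (\<Sum>j\<in>UNIV. (snd (snd y)) $ j *\<^sub>R AA \<Phi> (PP y) (0, axis j 1))" for y
  have dG: "(G has_derivative (\<lambda>d. BB \<Phi> (PP x) (1,0) (PP d) + (\<Sum>j\<in>UNIV. (snd (snd x)) $ j *\<^sub>R BB \<Phi> (PP x) (0, axis j 1) (PP d)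
               + (snd (snd d)) $ j *\<^sub>R AA \<Phi> (PP x) (0, axis j 1)))) (at x)"
    unfolding G_def[abs_def]
    by (intro has_derivative_add has_derivative_sum has_derivative_scaleR dA dv)
  have Geq: "G y = AA \<Phi> (PP y) (1, snd (snd y))" if y: "y \<in> jet_dom U" for y
  proof -
    have py: "PP y \<in> U" using y by (cases y) (auto simp: jet_dom_def PP_def)
    have "AA \<Phi> (PP y) (1, snd (snd y)) = AA \<Phi> (PP y) ((1,0) + (0, snd (snd y)))" by simp
    also have "\<dots> = AA \<Phi> (PP y) (1,0) + AA \<Phi> (PP y) (0, snd (snd y))"
      by (rule linear_add[OF L1lin[OF py]])
    finally show ?thesis unfolding G_def using lin_pair0[OF L1lin[OF py]] by simp
  qed
  have Meq: "BB \<Phi> (PP x) (1,0) (PP d) + (\<Sum>j\<in>UNIV. (snd (snd x)) $ j *\<^sub>R BB \<Phi> (PP x) (0, axis j 1) (PP d)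
               + (snd (snd d)) $ j *\<^sub>R AA \<Phi> (PP x) (0, axis j 1))
         = BB \<Phi> (PP x) (1, snd (snd x)) (PP d) + AA \<Phi> (PP x) (0, snd (snd d))" for d
  proof -
    have "BB \<Phi> (PP x) (1, snd (snd x)) (PP d) = BB \<Phi> (PP x) ((1,0) + (0, snd (snd x))) (PP d)" by simp
    also have "\<dots> = BB \<Phi> (PP x) (1,0) (PP d) + BB \<Phi> (PP x) (0, snd (snd x)) (PP d)"
      using linear_add[OF L3[OF px, of "PP d"], of "(1,0)" "(0, snd (snd x))"] by (simp only:)
    finally show ?thesis
      using lin_pair0[OF L1lin[OF px], of "snd (snd d)"] lin_pair0[OF L3[OF px, of "PP d"], of "snd (snd x)"]
      by (simp add: sum.distrib)
  qed
  have dG2: "((\<lambda>y. AA \<Phi> (PP y) (1, snd (snd y))) has_derivative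
     (\<lambda>d. BB \<Phi> (PP x) (1, snd (snd x)) (PP d) + AA \<Phi> (PP x) (0, snd (snd d)))) (at x)"
    using has_derivative_transform_within_open[OF dG open_jet_dom[OF U] x Geq] Meq by simp
  show ?thesis unfolding jp_eq
    by (intro has_derivative_Pair has_derivative_fst[OF has_derivative_ident] dPhi dG2)
qed

end


context
  fixes \<Phi> :: "real \<times> (real^'n) \<Rightarrow> (real^'n)" and U U' :: "(real \<times> (real^'n)) set"
    and \<xi> \<xi>' :: "real \<times> (real^'n) \<times> (real^'n) \<Rightarrow> (real^'n)"
  assumes U: "open U" and U': "open U'" and sm: "smooth_on U \<Phi>"
    and maps: "\<forall>p\<in>U. (fst p, \<Phi> p) \<in> U'"
    and smx: "smooth_on (jet_dom U) \<xi>" and smx': "smooth_on (jet_dom U') \<xi>'"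
    and hyp: "\<forall>x\<in>jet_dom U. frechet_derivative (jet_prolong \<Phi>) (at x) (so_vf \<xi> x)
                        = so_vf \<xi>' (jet_prolong \<Phi> x)"
begin

lemma PPin: "x \<in> jet_dom U \<Longrightarrow> PP x \<in> U"
  by (cases x) (auto simp: jet_dom_def PP_def)

lemma DJ: assumes x: "x \<in> jet_dom U" shows "frechet_derivative (jet_prolong \<Phi>) (at x) = (\<lambda>d. (fst d, AA \<Phi> (PP x) (PP d),
            BB \<Phi> (PP x) (1, snd (snd x)) (PP d) + AA \<Phi> (PP x) (0, snd (snd d))))"
  by (rule frechet_derivative_at[OF L5[OF U sm x], symmetric])

lemma Jin: assumes x: "x \<in> jet_dom U" shows "jet_prolong \<Phi> x \<in> jet_dom U'"
proof -
  obtain t q v where xe: "x = (t, q, v)" by (cases x)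
  have "(t, q) \<in> U" using x unfolding xe jet_dom_def by simp
  then have "(t, \<Phi> (t, q)) \<in> U'" using maps by (metis fst_conv)
  then show ?thesis unfolding xe jet_dom_def jet_prolong_def by simp
qed

lemma dxi: "x \<in> jet_dom U \<Longrightarrow> (\<xi> has_derivative frechet_derivative \<xi> (at x)) (at x)"
proof -
  have "Ck_on (Suc 0) (jet_dom U) \<xi>" using smx unfolding smooth_on_def by blast
  then have "\<xi> differentiable_on jet_dom U" by (simp only: Ck_on.simps)
  then show "x \<in> jet_dom U \<Longrightarrow> ?thesis" using open_jet_dom[OF U]
    by (simp add: differentiable_on_eq_differentiable_at frechet_derivative_works)
qed

lemma dxi': "y \<in> jet_dom U' \<Longrightarrow> (\<xi>' has_derivative frechet_derivative \<xi>' (at y)) (at y)"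
proof -
  have "Ck_on (Suc 0) (jet_dom U') \<xi>'" using smx' unfolding smooth_on_def by blast
  then have "\<xi>' differentiable_on jet_dom U'" by (simp only: Ck_on.simps)
  then show "y \<in> jet_dom U' \<Longrightarrow> ?thesis" using open_jet_dom[OF U']
    by (simp add: differentiable_on_eq_differentiable_at frechet_derivative_works)
qed

lemma H: assumes x: "x \<in> jet_dom U"
  shows "BB \<Phi> (PP x) (1, snd (snd x)) (1, snd (snd x)) + AA \<Phi> (PP x) (0, \<xi> x) = \<xi>' (jet_prolong \<Phi> x)"
proof -
  have "snd (snd (frechet_derivative (jet_prolong \<Phi>) (at x) (so_vf \<xi> x))) = snd (snd (so_vf \<xi>' (jet_prolong \<Phi> x)))"
    using hyp x by metis
  then show ?thesis unfolding DJ[OF x] by (simp add: so_vf_def PP_def)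
qed

lemma Jline: "x \<in> jet_dom U \<Longrightarrow> jet_prolong \<Phi> x = (fst x, \<Phi> (PP x), AA \<Phi> (PP x) (1, snd (snd x)))"
  by (simp add: jp_eq[OF U sm])

lemma KEY: assumes x: "x \<in> jet_dom U"
  shows "2 *\<^sub>R BB \<Phi> (PP x) (1, snd (snd x)) (0, e) + AA \<Phi> (PP x) (0, frechet_derivative \<xi> (at x) (0, 0, e))
       = frechet_derivative \<xi>' (at (jet_prolong \<Phi> x)) (0, 0, AA \<Phi> (PP x) (0, e))"
proof -
  define p where "p = PP x"
  define v where "v = snd (snd x)"
  have p: "p \<in> U" using PPin[OF x] p_def by simp
  define L where "L s = (fst x, fst (snd x), v + s *\<^sub>R e)" for s :: real
  have PL: "PP (L s) = p" for s by (simp add: L_def PP_def p_def)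
  have L0: "L 0 = x" by (simp add: L_def v_def)
  have Lin: "L s \<in> jet_dom U" for s
  proof -
    obtain a b c where xe: "x = (a, b, c)" by (cases x)
    show ?thesis using x unfolding xe L_def jet_dom_def by simp
  qed
  define k0 where "k0 = (1::real, v)"
  define k1 where "k1 = (0::real, e)"
  have lB: "linear (BB \<Phi> p k)" for k using L2lin[OF U sm p] .
  have lBk: "linear (\<lambda>k. BB \<Phi> p k h)" for h using L3[OF U sm p] .
  have lA: "linear (AA \<Phi> p)" using L1lin[OF U sm p] .
  have kk: "(1, v + s *\<^sub>R e) = k0 + s *\<^sub>R k1" for s by (simp add: k0_def k1_def)
  have bil: "BB \<Phi> p (1, v + s *\<^sub>R e) (1, v + s *\<^sub>R e)
     = BB \<Phi> p k0 k0 + s *\<^sub>R (BB \<Phi> p k1 k0 + BB \<Phi> p k0 k1) + (s * s) *\<^sub>R BB \<Phi> p k1 k1" for s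
  proof -
    have 1: "BB \<Phi> p (k0 + s *\<^sub>R k1) h = BB \<Phi> p k0 h + s *\<^sub>R BB \<Phi> p k1 h" for h
      using linear_add[OF lBk[of h], of k0 "s *\<^sub>R k1"] linear_scale[OF lBk[of h], of s k1] by simp
    have 2: "BB \<Phi> p k (k0 + s *\<^sub>R k1) = BB \<Phi> p k k0 + s *\<^sub>R BB \<Phi> p k k1" for k
      using linear_add[OF lB[of k], of k0 "s *\<^sub>R k1"] linear_scale[OF lB[of k], of s k1] by simp
    show ?thesis unfolding kk 1 2 by (simp add: algebra_simps)
  qed
  have Aline: "AA \<Phi> p (1, v + s *\<^sub>R e) = AA \<Phi> p (1, v) + s *\<^sub>R AA \<Phi> p (0, e)" for s
  proof -
    have "AA \<Phi> p (1, v + s *\<^sub>R e) = AA \<Phi> p (k0 + s *\<^sub>R k1)" by (simp only: kk)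
    also have "\<dots> = AA \<Phi> p k0 + s *\<^sub>R AA \<Phi> p k1" by (simp only: linear_add[OF lA] linear_scale[OF lA])
    finally show ?thesis by (simp only: k0_def k1_def)
  qed
  have Jl: "jet_prolong \<Phi> (L s) = (fst x, \<Phi> p, AA \<Phi> p (1, v) + s *\<^sub>R AA \<Phi> p (0, e))" for s
    using Jline[OF Lin[of s]] PL[of s] Aline[of s] by (simp add: L_def)
  define F1 where "F1 s = BB \<Phi> p k0 k0 + s *\<^sub>R (BB \<Phi> p k1 k0 + BB \<Phi> p k0 k1) + (s * s) *\<^sub>R BB \<Phi> p k1 k1
        + AA \<Phi> p (0, \<xi> (L s))" for s
  define F2 where "F2 s = \<xi>' (fst x, \<Phi> p, AA \<Phi> p (1, v) + s *\<^sub>R AA \<Phi> p (0, e))" for s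
  have F12: "F1 = F2"
  proof
    fix s
    have "BB \<Phi> p (1, v + s *\<^sub>R e) (1, v + s *\<^sub>R e) + AA \<Phi> p (0, \<xi> (L s)) = \<xi>' (jet_prolong \<Phi> (L s))"
      using H[OF Lin[of s]] PL[of s] by (simp add: L_def)
    then show "F1 s = F2 s" unfolding F1_def F2_def bil Jl .
  qed
  have dL: "(L has_derivative (\<lambda>d. (0, 0, d *\<^sub>R e))) (at 0)"
    unfolding L_def[abs_def] by (auto intro!: derivative_eq_intros)
  have dxL: "((\<lambda>s. \<xi> (L s)) has_derivative (\<lambda>d. frechet_derivative \<xi> (at x) (0, 0, d *\<^sub>R e))) (at 0)"
    using diff_chain_at[OF dL, of \<xi>] dxi[OF Lin[of 0]] L0 by (simp add: o_def)
  have lA0: "linear (\<lambda>z. AA \<Phi> p (0, z))"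
    by (rule linearI) (simp_all add: linear_add[OF lA, symmetric] linear_scale[OF lA, symmetric])
  have blA0: "bounded_linear (\<lambda>z. AA \<Phi> p (0, z))" using lA0 linear_conv_bounded_linear by blast
  have dAx: "((\<lambda>s. AA \<Phi> p (0, \<xi> (L s))) has_derivative (\<lambda>d. AA \<Phi> p (0, frechet_derivative \<xi> (at x) (0, 0, d *\<^sub>R e)))) (at 0)"
    using bounded_linear.has_derivative[OF blA0 dxL] .
  have dF1: "(F1 has_derivative (\<lambda>d. d *\<^sub>R (BB \<Phi> p k1 k0 + BB \<Phi> p k0 k1) + AA \<Phi> p (0, frechet_derivative \<xi> (at x) (0, 0, d *\<^sub>R e)))) (at 0)"
    unfolding F1_def[abs_def] by (auto intro!: derivative_eq_intros dAx)
  define g where "g s = (fst x, \<Phi> p, AA \<Phi> p (1, v) + s *\<^sub>R AA \<Phi> p (0, e))" for s :: real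
  have dg: "(g has_derivative (\<lambda>d. (0, 0, d *\<^sub>R AA \<Phi> p (0, e)))) (at 0)"
    unfolding g_def[abs_def] by (auto intro!: derivative_eq_intros)
  have g0: "g 0 = jet_prolong \<Phi> x" using Jline[OF x] by (simp add: g_def p_def v_def)
  have dF2: "(F2 has_derivative (\<lambda>d. frechet_derivative \<xi>' (at (jet_prolong \<Phi> x)) (0, 0, d *\<^sub>R AA \<Phi> p (0, e)))) (at 0)"
    using diff_chain_at[OF dg, of \<xi>'] dxi'[OF Jin[OF x]] g0 by (simp add: o_def F2_def[abs_def] g_def[abs_def])
  have "(\<lambda>d. d *\<^sub>R (BB \<Phi> p k1 k0 + BB \<Phi> p k0 k1) + AA \<Phi> p (0, frechet_derivative \<xi> (at x) (0, 0, d *\<^sub>R e)))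
      = (\<lambda>d. frechet_derivative \<xi>' (at (jet_prolong \<Phi> x)) (0, 0, d *\<^sub>R AA \<Phi> p (0, e)))"
    using has_derivative_unique[OF dF1] dF2 F12 by simp
  from fun_cong[OF this, of 1]
  have "(BB \<Phi> p k1 k0 + BB \<Phi> p k0 k1) + AA \<Phi> p (0, frechet_derivative \<xi> (at x) (0, 0, e))
      = frechet_derivative \<xi>' (at (jet_prolong \<Phi> x)) (0, 0, AA \<Phi> p (0, e))" by simp
  moreover have "BB \<Phi> p k1 k0 = BB \<Phi> p k0 k1" using L4[OF U sm p] .
  ultimately show ?thesis unfolding p_def[symmetric] v_def[symmetric] k0_def k1_def
    by (simp add: scaleR_2)
qed

lemma lA0: "p \<in> U \<Longrightarrow> linear (\<lambda>z. AA \<Phi> p (0, z))"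
  using L1lin[OF U sm]
  by (intro linearI) (simp_all add: linear_add[OF L1lin[OF U sm], symmetric] linear_scale[OF L1lin[OF U sm], symmetric])

lemma final: assumes x: "x \<in> jet_dom U"
  shows "frechet_derivative (jet_prolong \<Phi>) (at x) (hlift (dyn_conn_t \<xi>) (dyn_conn_q \<xi>) x u)
          = hlift (dyn_conn_t \<xi>') (dyn_conn_q \<xi>') (jet_prolong \<Phi> x)
                  (fst u, frechet_derivative \<Phi> (at (fst x, fst (snd x))) u)"
proof -
  obtain u0 w where ue: "u = (u0, w)" by (cases u)
  define p where "p = PP x"
  define v where "v = snd (snd x)"
  define e where "e = w - u0 *\<^sub>R v"
  have p: "p \<in> U" using PPin[OF x] p_def by simp
  have lA: "linear (AA \<Phi> p)" using L1lin[OF U sm p] .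
  have lA0': "linear (\<lambda>z. AA \<Phi> p (0, z))" using lA0[OF p] .
  have lB: "linear (BB \<Phi> p (1, v))" using L2lin[OF U sm p] .
  have Jx: "jet_prolong \<Phi> x \<in> jet_dom U'" using Jin[OF x] .
  have lx: "linear (frechet_derivative \<xi> (at x))" using has_derivative_linear[OF dxi[OF x]] .
  have lx': "linear (frechet_derivative \<xi>' (at (jet_prolong \<Phi> x)))" using has_derivative_linear[OF dxi'[OF Jx]] .
  have PhiA: "frechet_derivative \<Phi> (at (fst x, fst (snd x))) = AA \<Phi> p" by (simp add: AA_def p_def PP_def)
  have Jv: "snd (snd (jet_prolong \<Phi> x)) = AA \<Phi> p (1, v)" using Jline[OF x] by (simp add: p_def v_def)
  have Ae: "AA \<Phi> p (u0, w) - u0 *\<^sub>R AA \<Phi> p (1, v) = AA \<Phi> p (0, e)"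
  proof -
    have "(0::real, e) = (u0, w) - u0 *\<^sub>R (1, v)" by (simp add: e_def)
    then show ?thesis by (simp only: linear_diff[OF lA] linear_scale[OF lA])
  qed
  have Bu: "BB \<Phi> p (1, v) (u0, w) = u0 *\<^sub>R BB \<Phi> p (1, v) (1, v) + BB \<Phi> p (1, v) (0, e)"
  proof -
    have "(u0, w) = u0 *\<^sub>R (1::real, v) + (0, e)" by (simp add: e_def)
    then show ?thesis by (simp only: linear_add[OF lB] linear_scale[OF lB])
  qed
  have Az: "AA \<Phi> p (0, u0 *\<^sub>R \<xi> x + (1/2) *\<^sub>R frechet_derivative \<xi> (at x) (0, 0, e))
     = u0 *\<^sub>R AA \<Phi> p (0, \<xi> x) + (1/2) *\<^sub>R AA \<Phi> p (0, frechet_derivative \<xi> (at x) (0, 0, e))"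
    using linear_add[OF lA0'] linear_scale[OF lA0'] by simp
  have K: "2 *\<^sub>R BB \<Phi> p (1, v) (0, e) + AA \<Phi> p (0, frechet_derivative \<xi> (at x) (0, 0, e))
       = frechet_derivative \<xi>' (at (jet_prolong \<Phi> x)) (0, 0, AA \<Phi> p (0, e))"
    using KEY[OF x, of e] by (simp add: p_def v_def)
  have HH: "BB \<Phi> p (1, v) (1, v) + AA \<Phi> p (0, \<xi> x) = \<xi>' (jet_prolong \<Phi> x)"
    using H[OF x] by (simp add: p_def v_def)
  have lhs: "frechet_derivative (jet_prolong \<Phi>) (at x) (hlift (dyn_conn_t \<xi>) (dyn_conn_q \<xi>) x u)
     = (u0, AA \<Phi> p (u0, w), BB \<Phi> p (1, v) (u0, w) + AA \<Phi> p (0, u0 *\<^sub>R \<xi> x + (1/2) *\<^sub>R frechet_derivative \<xi> (at x) (0, 0, e)))"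
    unfolding ue hlift_eq[OF lx] DJ[OF x] by (simp add: PP_def p_def v_def e_def)
  have rhs: "hlift (dyn_conn_t \<xi>') (dyn_conn_q \<xi>') (jet_prolong \<Phi> x) (fst u, frechet_derivative \<Phi> (at (fst x, fst (snd x))) u)
     = (u0, AA \<Phi> p (u0, w), u0 *\<^sub>R \<xi>' (jet_prolong \<Phi> x) + (1/2) *\<^sub>R frechet_derivative \<xi>' (at (jet_prolong \<Phi> x)) (0, 0, AA \<Phi> p (0, e)))"
    unfolding ue fst_conv PhiA hlift_eq[OF lx'] Jv Ae ..
  have third: "BB \<Phi> p (1, v) (u0, w) + AA \<Phi> p (0, u0 *\<^sub>R \<xi> x + (1/2) *\<^sub>R frechet_derivative \<xi> (at x) (0, 0, e))
     = u0 *\<^sub>R \<xi>' (jet_prolong \<Phi> x) + (1/2) *\<^sub>R frechet_derivative \<xi>' (at (jet_prolong \<Phi> x)) (0, 0, AA \<Phi> p (0, e))"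
    unfolding Bu Az K[symmetric] HH[symmetric] by (simp add: algebra_simps)
  show ?thesis unfolding lhs rhs third ..
qed

end

theorem proposition4:
  fixes \<Phi> :: "real \<times> (real^'n) \<Rightarrow> (real^'n)"
    and U U' :: "(real \<times> (real^'n)) set"
    and \<xi> \<xi>' :: "real \<times> (real^'n) \<times> (real^'n) \<Rightarrow> (real^'n)"
  assumes "open U" and "open U'"
    and "smooth_on U \<Phi>"
    and "\<forall>p\<in>U. (fst p, \<Phi> p) \<in> U'"
    and "inj_on (\<lambda>p. (fst p, \<Phi> p)) U"
    and "\<forall>p\<in>U. bij (\<lambda>w. frechet_derivative \<Phi> (at p) (0, w))"
    and "smooth_on (jet_dom U) \<xi>"
    and "smooth_on (jet_dom U') \<xi>'"
    and "\<forall>x\<in>jet_dom U. frechet_derivative (jet_prolong \<Phi>) (at x) (so_vf \<xi> x)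
                        = so_vf \<xi>' (jet_prolong \<Phi> x)"
  shows "smooth_on (jet_dom U) (dyn_conn_t \<xi>)
       \<and> (\<forall>j. smooth_on (jet_dom U) (dyn_conn_q \<xi> j))
       \<and> (\<forall>x\<in>jet_dom U. \<forall>u.
            frechet_derivative (jet_prolong \<Phi>) (at x) (hlift (dyn_conn_t \<xi>) (dyn_conn_q \<xi>) x u)
          = hlift (dyn_conn_t \<xi>') (dyn_conn_q \<xi>') (jet_prolong \<Phi> x)
                  (fst u, frechet_derivative \<Phi> (at (fst x, fst (snd x))) u))"
  using part1[OF open_jet_dom[OF assms(1)] assms(7)] final[OF assms(1,2,3,4,7,8,9)] by blast


end
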